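(* Let $\gamma>0$ and $\varepsilon>0$. In the setting below, the algorithm PrivTree$(D,\lambda,\theta,\delta)$ with any $\theta\in\mathbb{R}$, with $\lambda\ge \frac{2e^{\gamma}-1}{e^{\gamma}-1}\cdot\frac{1}{\varepsilon}$ and $\delta=\gamma\lambda$, satisfies $\varepsilon$-differential privacy (with respect to its output tree, which contains no counts).
   Context: $\mathrm{Lap}(\lambda)$ is the Laplace distribution with density $\frac{1}{2\lambda}e^{-|y|/\lambda}$. Setting: $\Omega$ is a domain and there is a fixed, data-independent hierarchical splitting scheme of fanout $\beta\ge 2$: an infinite rooted tree of candidate nodes in which every node $v$ has exactly $\beta$ children, each node $v$ carries a sub-domain $\mathrm{dom}(v)\subseteq\Omega$, the root $v_1$ has $\mathrm{dom}(v_1)=\Omega$, and the sub-domains of the $\beta$ children of $v$ partition $\mathrm{dom}(v)$. $\mathrm{depth}(v)$ is the hop distance from $v$ to the root. A dataset $D$ is a finite multiset of points of $\Omega$; $c(v)$ is the number of points of $D$ lying in $\mathrm{dom}(v)$. PrivTree$(D,\lambda,\theta,\delta)$ (with $\lambda>0$, $\theta\in\mathbb{R}$, $\delta>0$): start with the tree consisting only of the root, marked unvisited. While some node $v$ is unvisited: mark $v$ visited; set $b(v)=\max\{\theta-\delta,\ c(v)-\mathrm{depth}(v)\cdot\delta\}$; set $\hat b(v)=b(v)+\eta_v$ where $\eta_v\sim\mathrm{Lap}(\lambda)$ is drawn freshly and independently; if $\hat b(v)>\theta$, add all $\beta$ children of $v$ to the tree as unvisited nodes. The output is the resulting tree (its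 set of nodes with their sub-domains), with all counts $c,b,\hat b$ removed. Two datasets are neighboring if one is obtained from the other by inserting one point. An algorithm $\mathcal{A}$ is $\varepsilon$-differentially private if for all neighboring $D,D'$ and every possible output $O$, $\ln\big(\Pr[\mathcal{A}(D)=O]/\Pr[\mathcal{A}(D')=O]\big)\le\varepsilon$. *)

theory Defs
  imports "HOL-Probability.Probability" "HOL-Library.Multiset"
begin

text \<open>Candidate nodes of the infinite beta-ary tree are lists of child indices
  (the root is the empty list; the i-th child of v is v @ [i], i < beta).
  depth v = length v.\<close>

definition splitting_scheme :: "'a set \<Rightarrow> nat \<Rightarrow> (nat list \<Rightarrow> 'a set) \<Rightarrow> bool" where
  "splitting_scheme \<Omega> \<beta> sdom \<longleftrightarrow> 2 \<le> \<beta> \<and> sdom [] = \<Omega> \<and>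
     (\<forall>v. set v \<subseteq> {..<\<beta>} \<longrightarrow>
        (\<Union>i<\<beta>. sdom (v @ [i])) = sdom v \<and> disjoint_family_on (\<lambda>i. sdom (v @ [i])) {..<\<beta>})"

definition laplace :: "real \<Rightarrow> real measure" where
  "laplace l = density lborel (\<lambda>y. ennreal (exp (- \<bar>y\<bar> / l) / (2 * l)))"

definition noise_space :: "real \<Rightarrow> (nat list \<Rightarrow> real) measure" where
  "noise_space l = PiM UNIV (\<lambda>_. laplace l)"

definition node_count :: "(nat list \<Rightarrow> 'a set) \<Rightarrow> 'a multiset \<Rightarrow> nat list \<Rightarrow> nat" where
  "node_count sdom D v = size (filter_mset (\<lambda>p. p \<in> sdom v) D)"

definition biased_count ::
  "(nat list \<Rightarrow> 'a set) \<Rightarrow> 'a multiset \<Rightarrow> real \<Rightarrow> real \<Rightarrow> nat list \<Rightarrow> real" where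
  "biased_count sdom D \<theta> \<delta> v = max (\<theta> - \<delta>) (real (node_count sdom D v) - real (length v) * \<delta>)"

definition privtree_output ::
  "nat \<Rightarrow> (nat list \<Rightarrow> 'a set) \<Rightarrow> 'a multiset \<Rightarrow> real \<Rightarrow> real \<Rightarrow> (nat list \<Rightarrow> real) \<Rightarrow> nat list set" where
  "privtree_output \<beta> sdom D \<theta> \<delta> \<eta> =
     {v. set v \<subseteq> {..<\<beta>} \<and>
         (\<forall>k<length v. biased_count sdom D \<theta> \<delta> (take k v) + \<eta> (take k v) > \<theta>)}"

definition privtree_prob ::
  "nat \<Rightarrow> (nat list \<Rightarrow> 'a set) \<Rightarrow> 'a multiset \<Rightarrow> real \<Rightarrow> real \<Rightarrow> real \<Rightarrow> nat list set \<Rightarrow> real" where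
  "privtree_prob \<beta> sdom D l \<theta> \<delta> T =
     measure (noise_space l) {\<eta> \<in> space (noise_space l). privtree_output \<beta> sdom D \<theta> \<delta> \<eta> = T}"

end

theory Submission
  imports Defs
begin



definition lapf :: "real \<Rightarrow> real \<Rightarrow> real" where
  "lapf l y = exp (- \<bar>y\<bar> / l) / (2 * l)"

lemma laplace_alt: "laplace l = density lborel (\<lambda>y. ennreal (lapf l y))"
  by (simp add: laplace_def lapf_def)

lemma lapf_borel[measurable]: "lapf l \<in> borel_measurable borel"
  unfolding lapf_def by measurable

lemma exp_neg_div_tendsto:
  fixes l :: real
  assumes l: "0 < l" shows "((\<lambda>x::real. exp (- x / l)) \<longlongrightarrow> 0) at_top"
proof -
    have h1: "LIM x at_top. (1/l) * x :> at_top"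
      using filterlim_tendsto_pos_mult_at_top[OF tendsto_const _ filterlim_ident, of "1/l"] l by simp
    have h2: "LIM x at_top. - ((1/l) * x) :> at_bot"
      using h1 by (simp add: filterlim_uminus_at_top[symmetric])
    have "((\<lambda>x. exp (- ((1/l) * x))) \<longlongrightarrow> 0) at_top"
      by (rule filterlim_compose[OF exp_at_bot h2])
    then show ?thesis by simp
qed

lemma lap_Ici_pos:
  assumes l: "0 < l" and a: "0 \<le> a"
  shows "emeasure (laplace l) {a..} = ennreal (exp (- a / l) / 2)"
proof -
  have "emeasure (laplace l) {a..} = (\<integral>\<^sup>+x. ennreal (lapf l x) * indicator {a ..} x \<partial>lborel)"
    unfolding laplace_alt by (subst emeasure_density) (auto simp: mult.commute)
  also have "\<dots> = 0 - (- exp (- a / l) / 2)"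
  proof (rule nn_integral_FTC_atLeast)
    fix x assume "a \<le> x"
    then have "\<bar>x\<bar> = x" using a by simp
    show "DERIV (\<lambda>x. - exp (- x / l) / 2) x :> lapf l x"
      unfolding lapf_def \<open>\<bar>x\<bar> = x\<close> using l
      by (auto intro!: derivative_eq_intros simp: field_simps)
  next
    fix x show "0 \<le> lapf l x" using l by (simp add: lapf_def)
  next
    have "((\<lambda>x. exp (- x / l) / 2) \<longlongrightarrow> 0 / 2) at_top"
      by (rule tendsto_divide[OF exp_neg_div_tendsto[OF l] tendsto_const]) simp
    then have "((\<lambda>x. - (exp (- x / l) / 2)) \<longlongrightarrow> - (0 / 2)) at_top"
      by (rule tendsto_minus)
    then show "((\<lambda>x. - exp (- x / l) / 2) \<longlongrightarrow> 0) at_top" by simp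
  qed simp
  finally show ?thesis by simp
qed

lemma lap_Icc_neg:
  assumes l: "0 < l" and a: "a \<le> 0"
  shows "emeasure (laplace l) {a..0} = ennreal ((1 - exp (a / l)) / 2)"
proof -
  have "emeasure (laplace l) {a..0} = (\<integral>\<^sup>+x. ennreal (lapf l x) * indicator {a ..0} x \<partial>lborel)"
    unfolding laplace_alt by (subst emeasure_density) (auto simp: mult.commute)
  also have "\<dots> = exp (0 / l) / 2 - exp (a / l) / 2"
  proof (rule nn_integral_FTC_Icc)
    fix x assume "x \<in> {a..0}"
    then have "\<bar>x\<bar> = - x" by simp
    show "DERIV (\<lambda>x. exp (x / l) / 2) x :> lapf l x"
      unfolding lapf_def \<open>\<bar>x\<bar> = -x\<close> using l
      by (auto intro!: derivative_eq_intros simp: field_simps)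
  next
    fix x show "0 \<le> lapf l x" using l by (simp add: lapf_def)
  qed (use a in auto)
  finally show ?thesis by (simp add: diff_divide_distrib)
qed

lemma lap_sing: "emeasure (laplace l) {a} = 0"
  unfolding laplace_alt
  by (subst emeasure_density) (auto intro!: nn_integral_null_set[where M=lborel, simplified])

lemma sets_laplace[simp]: "sets (laplace l) = sets borel"
  by (simp add: laplace_def)

lemma space_laplace[simp]: "space (laplace l) = UNIV"
  by (simp add: laplace_def)

definition lapS :: "real \<Rightarrow> real \<Rightarrow> real" where
  "lapS l a = (if 0 \<le> a then exp (- a / l) / 2 else 1 - exp (a / l) / 2)"

lemma lap_Ioi_eq_Ici: "emeasure (laplace l) {a<..} = emeasure (laplace l) {a..}"
proof -
  have "{a..} = {a} \<union> {a<..}" by auto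
  then have "emeasure (laplace l) {a..} = emeasure (laplace l) {a} + emeasure (laplace l) {a<..}"
    by (simp add: plus_emeasure)
  then show ?thesis by (simp add: lap_sing)
qed

lemma lap_Ici:
  assumes l: "0 < l"
  shows "emeasure (laplace l) {a..} = ennreal (lapS l a)"
proof (cases "0 \<le> a")
  case True then show ?thesis using lap_Ici_pos[OF l True] by (simp add: lapS_def)
next
  case False
  have "{a..} = {a..0} \<union> {0<..}" using False by auto
  then have "emeasure (laplace l) {a..} = emeasure (laplace l) {a..0} + emeasure (laplace l) {0<..}"
    by (subst plus_emeasure) auto
  also have "\<dots> = ennreal ((1 - exp (a / l)) / 2) + ennreal (1/2)"
    using lap_Icc_neg[OF l, of a] False lap_Ioi_eq_Ici[of l 0] lap_Ici_pos[OF l, of 0] by simp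
  also have "\<dots> = ennreal (lapS l a)"
    using False l by (subst ennreal_plus[symmetric]) (auto simp: lapS_def field_simps)
  finally show ?thesis .
qed

lemma prob_space_laplace:
  assumes l: "0 < l" shows "prob_space (laplace l)"
proof
  let ?A = "\<lambda>n::nat. {- real n..}"
  have inc: "incseq ?A" by (auto simp: incseq_def)
  have U: "(\<Union>n. ?A n) = UNIV"
  proof safe
    fix x :: real
    obtain n :: nat where "- x \<le> real n" using real_arch_simple by blast
    then show "x \<in> (\<Union>n. ?A n)" by (intro UN_I[of n]) auto
  qed auto
  have L1: "(\<lambda>n. emeasure (laplace l) (?A n)) \<longlonglongrightarrow> emeasure (laplace l) UNIV"
  proof -
    have "range ?A \<subseteq> sets (laplace l)" by auto
    from Lim_emeasure_incseq[OF this inc] U show ?thesis by simp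
  qed
  have eq: "emeasure (laplace l) (?A n) = ennreal (1 - exp (- real n / l) / 2)" for n
    using lap_Ici[OF l] by (cases "n = 0") (auto simp: lapS_def)
  have "(\<lambda>n. exp (- real n / l)) \<longlonglongrightarrow> 0"
    using filterlim_compose[OF exp_neg_div_tendsto[OF l] filterlim_real_sequentially] by simp
  then have "(\<lambda>n. ennreal (1 - exp (- real n / l) / 2)) \<longlonglongrightarrow> ennreal (1 - 0 / 2)"
    by (intro tendsto_intros) auto
  then have "(\<lambda>n. emeasure (laplace l) (?A n)) \<longlonglongrightarrow> 1" by (simp add: eq)
  with L1 have "emeasure (laplace l) UNIV = 1" using LIMSEQ_unique by blast
  then show "emeasure (laplace l) (space (laplace l)) = 1" by simp
qed

lemma lapS_bounds:
  assumes l: "0 < l" shows "0 < lapS l a" "lapS l a < 1"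
proof (atomize(full), cases "0 \<le> a")
  case True
  then have "exp (- (a / l)) \<le> 1" using l by simp
  then have "exp (- (a / l)) < 2" by linarith
  then show "0 < lapS l a \<and> lapS l a < 1" using True by (simp add: lapS_def)
next
  case False
  then have "exp (a / l) < 1" using l by (simp add: divide_neg_pos)
  then have "exp (a / l) < 2" by linarith
  then show "0 < lapS l a \<and> lapS l a < 1" using False by (simp add: lapS_def)
qed

lemma lap_Ioi:
  assumes l: "0 < l" shows "measure (laplace l) {a<..} = lapS l a"
  using lap_Ioi_eq_Ici[of l a] lap_Ici[OF l, of a] lapS_bounds[OF l, of a]
  by (simp add: measure_def)

lemma lap_Iic:
  assumes l: "0 < l" shows "measure (laplace l) {..a} = 1 - lapS l a"
proof -
  interpret prob_space "laplace l" by (rule prob_space_laplace[OF l])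
  have "{..a} = space (laplace l) - {a<..}" by auto
  then have "measure (laplace l) {..a} = 1 - measure (laplace l) {a<..}"
    using prob_compl[of "{a<..}"] by simp
  then show ?thesis using lap_Ioi[OF l] by simp
qed



definition sep :: "real \<Rightarrow> 'u set \<Rightarrow> ('u \<Rightarrow> real) \<Rightarrow> bool" where
  "sep d U p \<longleftrightarrow> (\<forall>u\<in>U. \<forall>v\<in>U. u \<noteq> v \<longrightarrow> d \<le> \<bar>p u - p v\<bar>)"

lemma sep_subset: "sep d U p \<Longrightarrow> V \<subseteq> U \<Longrightarrow> sep d V p"
  unfolding sep_def by blast

lemma sepD: "sep d U p \<Longrightarrow> u \<in> U \<Longrightarrow> v \<in> U \<Longrightarrow> u \<noteq> v \<Longrightarrow> d \<le> \<bar>p u - p v\<bar>"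
  unfolding sep_def by blast

lemma geo_aux: "(q::real) < 1 \<Longrightarrow> A + A * q / (1 - q) = A / (1 - q)"
  by (simp add: field_simps)

lemma geo_sum:
  fixes l d :: real
  assumes l: "0 < l" and d: "0 < d"
  shows "finite V \<Longrightarrow> sep d V p \<Longrightarrow> (\<forall>u\<in>V. p u \<le> m) \<Longrightarrow>
    (\<Sum>u\<in>V. exp (p u / l)) \<le> exp (m / l) / (1 - exp (- d / l))"
proof (induction "card V" arbitrary: V m rule: less_induct)
  case less
  have q: "exp (- d / l) < 1" "0 < 1 - exp (- d / l)" using l d by (simp_all add: divide_pos_pos)
  show ?case
  proof (cases "V = {}")
    case True then show ?thesis using q by simp
  next
    case False
    have "Max (p ` V) \<in> p ` V" using False less.prems(1) by (intro Max_in) auto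
    then obtain u0 where u0V: "u0 \<in> V" and u0M: "p u0 = Max (p ` V)" by auto
    have "\<forall>u\<in>V. p u \<le> p u0" using less.prems(1) unfolding u0M by auto
    note u0 = u0V this
    let ?V = "V - {u0}"
    have le: "\<forall>u\<in>?V. p u \<le> p u0 - d"
    proof
      fix u assume u: "u \<in> ?V"
      then have "d \<le> \<bar>p u - p u0\<bar>" using less.prems(2) u0(1) unfolding sep_def by auto
      moreover have "p u \<le> p u0" using u u0 by auto
      ultimately show "p u \<le> p u0 - d" by linarith
    qed
    have "card V > 0" using u0(1) less.prems(1) card_gt_0_iff by blast
    then have card: "card ?V < card V" using u0(1) by (simp add: card_Diff_singleton)
    have IH: "(\<Sum>u\<in>?V. exp (p u / l)) \<le> exp ((p u0 - d) / l) / (1 - exp (- d / l))"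
      using less.hyps[OF card _ sep_subset[OF less.prems(2)] le] less.prems(1) by auto
    have "(\<Sum>u\<in>V. exp (p u / l)) = exp (p u0 / l) + (\<Sum>u\<in>?V. exp (p u / l))"
      using u0(1) less.prems(1) by (simp add: sum.remove)
    also have "\<dots> \<le> exp (p u0 / l) + exp ((p u0 - d) / l) / (1 - exp (- d / l))"
      using IH by simp
    also have "exp ((p u0 - d) / l) = exp (p u0 / l) * exp (- d / l)"
      by (simp add: diff_divide_distrib exp_diff exp_minus field_simps)
    also have "exp (p u0 / l) + exp (p u0 / l) * exp (- d / l) / (1 - exp (- d / l))
       = exp (p u0 / l) / (1 - exp (- d / l))"
      by (rule geo_aux[OF q(1)])
    also have "\<dots> \<le> exp (m / l) / (1 - exp (- d / l))"
      using q less.prems(3) u0(1) l by (intro divide_right_mono) (auto simp: divide_right_mono)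
    finally show ?thesis .
  qed
qed

definition Lam :: "real \<Rightarrow> real \<Rightarrow> real" where
  "Lam l t = exp (min t 0 / l) - 1 + max t 0 / l"

definition kd :: "real \<Rightarrow> real \<Rightarrow> real \<Rightarrow> real" where
  "kd l d t = (if t < 0 then exp (t / l) / l else if t \<le> d then 1 / l else 0)"

lemma K_integral:
  assumes l: "0 < l" and d: "0 < d"
  shows "((\<lambda>\<tau>. kd l d (w - \<tau>)) has_integral (Lam l (min d w) - Lam l (min d (w - 1)))) {0..1}"
proof -
  define f where "f = (\<lambda>\<tau>. - Lam l (min d (w - \<tau>)))"
  have "((\<lambda>\<tau>. kd l d (w - \<tau>)) has_integral (f 1 - f 0)) {0..1}"
  proof (rule fundamental_theorem_of_calculus_interior_strong[where S = "{w, w - d}"])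
    show "continuous_on {0..1} f" unfolding f_def Lam_def
      by (intro continuous_intros) (use l in auto)
  next
    fix x assume x: "x \<in> {0<..<1} - {w, w - d}"
    have "(f has_field_derivative kd l d (w - x)) (at x)"
    proof (cases "w - x < 0")
      case True
      have "((\<lambda>\<tau>. - (exp ((w - \<tau>) / l) - 1)) has_field_derivative exp ((w - x) / l) / l) (at x)"
        using l by (auto intro!: derivative_eq_intros simp: field_simps)
      moreover have "kd l d (w - x) = exp ((w - x) / l) / l" using True by (simp add: kd_def)
      ultimately show ?thesis
      apply (simp only:)
      proof (rule has_field_derivative_transform_within_open[where S = "{w<..}"])
        show "x \<in> {w<..}" using True by simp
        fix y :: real assume "y \<in> {w<..}"
        then show "- (exp ((w - y) / l) - 1) = f y" using d
          by (simp add: f_def Lam_def min_def max_def)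
      qed auto
    next
      case False
      then have F: "0 < w - x" using x by auto
      show ?thesis
      proof (cases "w - x < d")
        case True
        have "((\<lambda>\<tau>. - ((w - \<tau>) / l)) has_field_derivative 1 / l) (at x)"
          using l by (auto intro!: derivative_eq_intros simp: field_simps)
        moreover have "kd l d (w - x) = 1 / l" using True F by (simp add: kd_def)
        ultimately show ?thesis
        apply (simp only:)
        proof (rule has_field_derivative_transform_within_open[where S = "{w - d<..<w}"])
          show "x \<in> {w - d<..<w}" using True F by simp
          fix y :: real assume "y \<in> {w - d<..<w}"
          then show "- ((w - y) / l) = f y" using d
            by (simp add: f_def Lam_def min_def max_def)
        qed auto
      next
        case False
        then have F2: "d < w - x" using x by auto
        have "((\<lambda>\<tau>. - (d / l)) has_field_derivative 0) (at x)"
          by (auto intro!: derivative_eq_intros)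
        moreover have "kd l d (w - x) = 0" using F2 d by (simp add: kd_def)
        ultimately show ?thesis
        apply (simp only:)
        proof (rule has_field_derivative_transform_within_open[where S = "{..<w - d}"])
          show "x \<in> {..<w - d}" using F2 by simp
          fix y :: real assume "y \<in> {..<w - d}"
          then show "- (d / l) = f y" using d
            by (simp add: f_def Lam_def min_def max_def)
        qed auto
      qed
    qed
    then show "(f has_vector_derivative kd l d (w - x)) (at x)"
      by (simp add: has_real_derivative_iff_has_vector_derivative)
  qed auto
  then show ?thesis by (simp add: f_def)
qed


lemma geo_val:
  fixes a :: real assumes a: "0 < a"
  shows "1 / (1 - exp (- a)) = 1 + 1 / (exp a - 1)" "exp (- a) / (1 - exp (- a)) = 1 / (exp a - 1)"
proof -
  have e: "exp a > 1" using a by simp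
  have "exp (- a) = 1 / exp a" by (simp add: exp_minus field_simps)
  then show "1 / (1 - exp (- a)) = 1 + 1 / (exp a - 1)" "exp (- a) / (1 - exp (- a)) = 1 / (exp a - 1)"
    using e by (simp_all add: field_simps)
qed

lemma pt_bound:
  fixes l d :: real
  assumes l: "0 < l" and d: "0 < d" and U: "finite U" and s: "sep d U p"
  shows "(\<Sum>u\<in>U. kd l d (p u)) \<le> (2 + 1 / (exp (d / l) - 1)) / l"
proof -
  define Z where "Z = {u\<in>U. 0 \<le> p u \<and> p u \<le> d}"
  define N where "N = {u\<in>U. p u < 0}"
  have ZN: "finite Z" "finite N" "Z \<subseteq> U" "N \<subseteq> U" using U by (auto simp: Z_def N_def)
  have "(\<Sum>u\<in>U. kd l d (p u)) = (\<Sum>u\<in>U. (if u \<in> Z then 1 / l else 0) + (if u \<in> N then exp (p u / l) / l else 0))"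
    by (intro sum.cong) (auto simp: kd_def Z_def N_def)
  also have "\<dots> = (\<Sum>u\<in>Z. 1 / l) + (\<Sum>u\<in>N. exp (p u / l) / l)"
    using U ZN by (simp add: sum.distrib sum.If_cases Int_absorb1)
  also have "\<dots> = (real (card Z) + (\<Sum>u\<in>N. exp (p u / l))) / l"
    by (simp add: sum_divide_distrib add_divide_distrib)
  finally have eq: "(\<Sum>u\<in>U. kd l d (p u)) = (real (card Z) + (\<Sum>u\<in>N. exp (p u / l))) / l" .
  have sN: "sep d N p" by (rule sep_subset[OF s ZN(4)])
  have gv: "1 / (1 - exp (- (d / l))) = 1 + 1 / (exp (d / l) - 1)"
    "exp (- (d / l)) / (1 - exp (- (d / l))) = 1 / (exp (d / l) - 1)"
    using geo_val[of "d / l"] l d by (simp_all add: divide_pos_pos)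
  have "real (card Z) + (\<Sum>u\<in>N. exp (p u / l)) \<le> 2 + 1 / (exp (d / l) - 1)"
  proof (cases "\<exists>u\<in>N. - d < p u")
    case True
    then obtain u where u: "u \<in> N" "- d < p u" by blast
    have pos: "0 < p z" if "z \<in> Z" for z
    proof -
      have "z \<noteq> u" using that u(1) by (auto simp: Z_def N_def)
      moreover have "z \<in> U" "u \<in> U" using that u(1) ZN(3,4) by auto
      ultimately have "d \<le> \<bar>p z - p u\<bar>" using sepD[OF s] by simp
      moreover have "p u < 0" "0 \<le> p z" using u(1) that by (auto simp: N_def Z_def)
      ultimately show ?thesis using u(2) by linarith
    qed
    have "card Z \<le> Suc 0"
    proof (subst card_le_Suc0_iff_eq[OF ZN(1)], intro ballI, rule ccontr)
      fix z1 z2 assume z: "z1 \<in> Z" "z2 \<in> Z" "z1 \<noteq> z2"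
      moreover have "z1 \<in> U" "z2 \<in> U" using z ZN(3) by auto
      ultimately have "d \<le> \<bar>p z1 - p z2\<bar>" using sepD[OF s] by simp
      moreover have "0 < p z1" "0 < p z2" using pos z by auto
      moreover have "p z1 \<le> d" "p z2 \<le> d" using z by (auto simp: Z_def)
      ultimately show False by linarith
    qed
    moreover have "(\<Sum>u\<in>N. exp (p u / l)) \<le> exp (0 / l) / (1 - exp (- d / l))"
      using geo_sum[OF l d ZN(2) sN, of 0] by (auto simp: N_def)
    moreover have "exp (0 / l) / (1 - exp (- d / l)) = 1 + 1 / (exp (d / l) - 1)" using gv(1) by simp
    moreover have "real (card Z) \<le> 1" using \<open>card Z \<le> Suc 0\<close> by simp
    ultimately show ?thesis by linarith
  next
    case False
    have "(\<Sum>u\<in>N. exp (p u / l)) \<le> exp (- d / l) / (1 - exp (- d / l))"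
    proof (rule geo_sum[OF l d ZN(2) sN, of "- d", THEN order_trans])
      show "\<forall>u\<in>N. p u \<le> - d" using False by (auto simp: N_def not_less)
    qed simp
    moreover have "card Z \<le> 2"
    proof (cases "card Z \<le> 1")
      case True then show ?thesis by simp
    next
      case False
      then have "\<not> (\<forall>a\<in>Z. \<forall>b\<in>Z. a = b)" using card_le_Suc0_iff_eq[OF ZN(1)] by simp
      then obtain z1 z2 where zz: "z1 \<in> Z" "z2 \<in> Z" "z1 \<noteq> z2" by blast
      have vals: "p z \<in> {0, d}" if zZ: "z \<in> Z" for z
      proof -
        have "\<exists>z'\<in>Z. z' \<noteq> z"
        proof (cases "z = z1")
          case True then show ?thesis using zz(2,3) by auto
        next
          case False then show ?thesis using zz(1) by auto
        qed
        then obtain z' where z': "z' \<in> Z" "z' \<noteq> z" by auto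
        moreover have "z \<in> U" "z' \<in> U" using zZ z'(1) ZN(3) by auto
        ultimately have dz: "d \<le> \<bar>p z - p z'\<bar>" using sepD[OF s, of z z'] by simp
        have b: "0 \<le> p z" "p z \<le> d" "0 \<le> p z'" "p z' \<le> d" using zZ z'(1) by (auto simp: Z_def)
        have "p z = 0 \<or> p z = d"
        proof (cases "p z \<le> p z'")
          case True then have "d \<le> p z' - p z" using dz by simp
          then show ?thesis using b by linarith
        next
          case False then have "d \<le> p z - p z'" using dz by simp
          then show ?thesis using b by linarith
        qed
        then show ?thesis by simp
      qed
      have inj: "inj_on p Z"
      proof (rule inj_onI, rule ccontr)
        fix x y assume "x \<in> Z" "y \<in> Z" "p x = p y" "x \<noteq> y"
        moreover have "x \<in> U" "y \<in> U" using \<open>x \<in> Z\<close> \<open>y \<in> Z\<close> ZN(3) by auto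
        ultimately have "d \<le> \<bar>p x - p y\<bar>" using sepD[OF s, of x y] by simp
        then show False using \<open>p x = p y\<close> d by simp
      qed
      have "card Z = card (p ` Z)" using card_image[OF inj] by simp
      also have "\<dots> \<le> card {0, d}" using vals by (intro card_mono) auto
      also have "\<dots> \<le> 2" by (simp add: card_insert_if)
      finally show ?thesis .
    qed
    moreover have "exp (- d / l) / (1 - exp (- d / l)) = 1 / (exp (d / l) - 1)" using gv(2) by simp
    moreover have "real (card Z) \<le> 2" using \<open>card Z \<le> 2\<close> by simp
    ultimately show ?thesis by linarith
  qed
  then show ?thesis unfolding eq using l by (simp add: divide_right_mono)
qed

lemma sum_K:
  fixes l d :: real
  assumes l: "0 < l" and d: "0 < d" and U: "finite U" and s: "sep d U w"
  shows "(\<Sum>u\<in>U. Lam l (min d (w u)) - Lam l (min d (w u - 1))) \<le> (2 + 1 / (exp (d / l) - 1)) / l"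
proof -
  have I: "((\<lambda>\<tau>. \<Sum>u\<in>U. kd l d (w u - \<tau>)) has_integral
      (\<Sum>u\<in>U. Lam l (min d (w u)) - Lam l (min d (w u - 1)))) {0..1}"
    using U by (intro has_integral_sum K_integral l d)
  have C: "((\<lambda>\<tau>. (2 + 1 / (exp (d / l) - 1)) / l) has_integral (2 + 1 / (exp (d / l) - 1)) / l) {0..1::real}"
    using has_integral_const_real[of "(2 + 1 / (exp (d / l) - 1)) / l" 0 "1::real"] by simp
  show ?thesis
  proof (rule has_integral_le[OF I C])
    fix \<tau> :: real
    have "sep d U (\<lambda>u. w u - \<tau>)" using s by (simp add: sep_def)
    then show "(\<Sum>u\<in>U. kd l d (w u - \<tau>)) \<le> (2 + 1 / (exp (d / l) - 1)) / l"
      using pt_bound[OF l d U] by blast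
  qed
qed

lemma lapS_sym: "1 - lapS l t = lapS l (- t)"
  by (cases "t = 0") (auto simp: lapS_def)

lemma Lam_pos: "0 \<le> t \<Longrightarrow> Lam l t = t / l" by (simp add: Lam_def)
lemma Lam_neg: "t \<le> 0 \<Longrightarrow> Lam l t = exp (t / l) - 1" by (simp add: Lam_def)

lemma Lam_mono_lip:
  assumes l: "0 < l" and yz: "y \<le> z"
  shows "Lam l y \<le> Lam l z" "Lam l z - Lam l y \<le> (z - y) / l"
proof -
  have A: "Lam l y \<le> Lam l z \<and> Lam l z - Lam l y \<le> (z - y) / l"
  proof (cases "0 \<le> y")
    case True
    then show ?thesis using yz l by (simp add: Lam_pos divide_right_mono diff_divide_distrib)
  next
    case False
    note y = False
    show ?thesis
    proof (cases "0 \<le> z")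
      case True
      have e1: "exp (y / l) \<le> 1" using y l by (simp add: divide_nonpos_pos)
      have e2: "1 + y / l \<le> exp (y / l)" by (rule exp_ge_add_one_self)
      have "0 \<le> z / l" using True l by simp
      have L: "Lam l y = exp (y / l) - 1" "Lam l z = z / l" using True y by (simp_all add: Lam_pos Lam_neg)
      have "(z - y) / l = z / l - y / l" by (simp add: diff_divide_distrib)
      then show ?thesis unfolding L using e1 e2 \<open>0 \<le> z / l\<close> by linarith
    next
      case False
      have "exp (y / l) \<le> exp (z / l)" using yz l by (simp add: divide_right_mono)
      moreover have "exp (z / l) - exp (y / l) \<le> (z - y) / l"
      proof -
        have "exp (z / l) * exp (- ((z - y) / l)) = exp (z / l + - ((z - y) / l))"
          by (simp only: exp_add)
        also have "z / l + - ((z - y) / l) = y / l" by (simp add: diff_divide_distrib)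
        finally have "exp (z / l) * exp (- ((z - y) / l)) = exp (y / l)" .
        then have "exp (z / l) - exp (y / l) = exp (z / l) * (1 - exp (- ((z - y) / l)))"
          by (simp add: right_diff_distrib)
        also have "\<dots> \<le> 1 * ((z - y) / l)"
        proof (rule mult_mono)
          show "exp (z / l) \<le> 1" using False l by (simp add: divide_nonpos_pos)
          show "1 - exp (- ((z - y) / l)) \<le> (z - y) / l"
            using exp_ge_add_one_self[of "- ((z - y) / l)"] by simp
          show "0 \<le> 1 - exp (- ((z - y) / l))" using yz l by (simp add: divide_nonneg_pos)
        qed simp
        finally show ?thesis by simp
      qed
      ultimately show ?thesis using y False by (simp add: Lam_neg)
    qed
  qed
  then show "Lam l y \<le> Lam l z" "Lam l z - Lam l y \<le> (z - y) / l" by auto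
qed

lemma lapS_mono:
  assumes l: "0 < l" and yz: "y \<le> z" shows "lapS l z \<le> lapS l y"
proof (cases "0 \<le> y")
  case True
  then have "exp (- (z / l)) \<le> exp (- (y / l))" using yz l by (simp add: divide_right_mono)
  then show ?thesis using True yz by (simp add: lapS_def)
next
  case False
  have a: "exp (y / l) \<le> 1" using False l by (simp add: divide_nonpos_pos)
  show ?thesis
  proof (cases "0 \<le> z")
    case True
    have "exp (- (z / l)) \<le> 1" using True l by simp
    then have "exp (- (z / l)) \<le> 2 - exp (y / l)" using a by linarith
    then show ?thesis using True False by (simp add: lapS_def)
  next
    case F2: False
    have "exp (y / l) \<le> exp (z / l)" using yz l by (simp add: divide_right_mono)
    then show ?thesis using F2 False by (simp add: lapS_def)
  qed
qed

lemma lapS_ratio: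
  assumes l: "0 < l" and yz: "y \<le> z"
  shows "lapS l y / lapS l z \<le> exp (Lam l z - Lam l y)"
proof -
  have pz: "0 < lapS l z" by (rule lapS_bounds[OF l])
  have "lapS l y \<le> exp (Lam l z - Lam l y) * lapS l z"
  proof (cases "0 \<le> y")
    case True
    then have "0 \<le> z" using yz by simp
    then have "exp (Lam l z - Lam l y) * lapS l z = exp ((z - y) / l) * (exp (- z / l) / 2)"
      using True by (simp add: Lam_pos lapS_def diff_divide_distrib)
    also have "\<dots> = exp (- y / l) / 2"
      by (simp add: exp_add[symmetric] diff_divide_distrib)
    finally show ?thesis using True by (simp add: lapS_def)
  next
    case False
    note y = False
    define A where "A = exp (y / l)"
    have A: "0 < A" "A \<le> 1" using y l by (auto simp: A_def divide_nonpos_pos)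
    show ?thesis
    proof (cases "0 \<le> z")
      case True
      have "exp (Lam l z - Lam l y) * lapS l z = exp (1 - A) * (exp (z / l) * exp (- z / l) / 2)"
        using True y by (simp add: Lam_pos Lam_neg lapS_def A_def exp_diff exp_add field_simps)
      also have "exp (z / l) * exp (- z / l) = 1" by (simp add: exp_add[symmetric])
      finally have e: "exp (Lam l z - Lam l y) * lapS l z = exp (1 - A) / 2" by simp
      have "2 - A \<le> exp (1 - A)" using exp_ge_add_one_self[of "1 - A"] by simp
      then show ?thesis unfolding e using y by (simp add: lapS_def A_def)
    next
      case False
      define B where "B = exp (z / l)"
      have B: "A \<le> B" "B \<le> 1" using yz l False by (auto simp: A_def B_def divide_right_mono divide_nonpos_pos)
      have "exp (Lam l z - Lam l y) * lapS l z = exp (B - A) * (1 - B / 2)"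
        using False y by (simp add: Lam_neg lapS_def A_def B_def)
      also have "\<dots> \<ge> (1 + (B - A)) * (1 - B / 2)"
        using B by (intro mult_right_mono exp_ge_add_one_self) auto
      finally have "(1 + (B - A)) * (1 - B / 2) \<le> exp (Lam l z - Lam l y) * lapS l z" .
      moreover have "1 - A / 2 \<le> (1 + (B - A)) * (1 - B / 2)"
      proof -
        have "(1 + (B - A)) * (1 - B / 2) - (1 - A / 2) = (B - A) * (1 - B) / 2"
          by (simp add: field_simps)
        also have "\<dots> \<ge> 0" using B by simp
        finally show ?thesis by simp
      qed
      ultimately show ?thesis using y by (simp add: lapS_def A_def)
    qed
  qed
  then show ?thesis using pz by (simp add: divide_le_eq)
qed



lemma ss_child:
  assumes "splitting_scheme \<Omega> \<beta> sdom" "set v \<subseteq> {..<\<beta>}" "i < \<beta>"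
  shows "sdom (v @ [i]) \<subseteq> sdom v"
proof -
  have "(\<Union>i<\<beta>. sdom (v @ [i])) = sdom v" using assms(1,2) unfolding splitting_scheme_def by blast
  then show ?thesis using assms(3) by blast
qed

lemma ss_disj:
  assumes "splitting_scheme \<Omega> \<beta> sdom" "set v \<subseteq> {..<\<beta>}" "i < \<beta>" "j < \<beta>" "i \<noteq> j"
  shows "sdom (v @ [i]) \<inter> sdom (v @ [j]) = {}"
proof -
  have "disjoint_family_on (\<lambda>i. sdom (v @ [i])) {..<\<beta>}"
    using assms(1,2) unfolding splitting_scheme_def by blast
  then show ?thesis using assms(3-5) unfolding disjoint_family_on_def by blast
qed

lemma ss_mono:
  assumes ss: "splitting_scheme \<Omega> \<beta> sdom"
  shows "set (v @ w) \<subseteq> {..<\<beta>} \<Longrightarrow> sdom (v @ w) \<subseteq> sdom v"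
proof (induction w rule: rev_induct)
  case Nil then show ?case by simp
next
  case (snoc i w)
  have "sdom (v @ w @ [i]) \<subseteq> sdom (v @ w)"
    using ss_child[OF ss, of "v @ w" i] snoc.prems by simp
  also have "\<dots> \<subseteq> sdom v" using snoc by simp
  finally show ?case by simp
qed

lemma ss_take:
  assumes ss: "splitting_scheme \<Omega> \<beta> sdom" and u: "set u \<subseteq> {..<\<beta>}"
  shows "sdom u \<subseteq> sdom (take k u)"
  using ss_mono[OF ss, of "take k u" "drop k u"] u by simp

lemma ss_chain:
  assumes ss: "splitting_scheme \<Omega> \<beta> sdom" and u: "set u \<subseteq> {..<\<beta>}" and v: "set v \<subseteq> {..<\<beta>}"
    and xu: "x \<in> sdom u" and xv: "x \<in> sdom v" and len: "length u \<le> length v"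
  shows "take (length u) v = u"
proof -
  have "k \<le> length u \<longrightarrow> take k v = take k u" for k
  proof (induction k)
    case 0 then show ?case by simp
  next
    case (Suc k)
    show ?case
    proof
      assume k: "Suc k \<le> length u"
      then have IH: "take k v = take k u" using Suc by simp
      have ku: "take (Suc k) u = take k u @ [u ! k]" using k by (simp add: take_Suc_conv_app_nth)
      have kv: "take (Suc k) v = take k u @ [v ! k]" using k len IH by (simp add: take_Suc_conv_app_nth)
      have "u ! k \<in> set u" "v ! k \<in> set v" using k len by auto
      then have "u ! k < \<beta>" "v ! k < \<beta>" using u v by auto
      have "set (take k u) \<subseteq> {..<\<beta>}" using u by (meson order_trans set_take_subset)
      show "take (Suc k) v = take (Suc k) u"
      proof (rule ccontr)
        assume ne: "take (Suc k) v \<noteq> take (Suc k) u"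
        then have "u ! k \<noteq> v ! k" using ku kv by auto
        have "x \<in> sdom (take (Suc k) u)" using ss_take[OF ss u] xu by blast
        moreover have "x \<in> sdom (take (Suc k) v)" using ss_take[OF ss v] xv by blast
        ultimately show False
          using ss_disj[OF ss \<open>set (take k u) \<subseteq> _\<close> \<open>u ! k < \<beta>\<close> \<open>v ! k < \<beta>\<close> \<open>u ! k \<noteq> v ! k\<close>] ku kv
          by auto
      qed
    qed
  qed
  then show ?thesis by simp
qed

lemma nc_add: "node_count sdom (D + {#x#}) v = node_count sdom D v + (if x \<in> sdom v then 1 else 0)"
  by (simp add: node_count_def)

lemma nc_mono: "sdom v \<subseteq> sdom u \<Longrightarrow> node_count sdom D v \<le> node_count sdom D u"
  unfolding node_count_def
  by (intro size_mset_mono filter_mset_mono_strong) auto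

definition Vld :: "nat \<Rightarrow> nat list set \<Rightarrow> nat \<Rightarrow> bool" where
  "Vld \<beta> T n \<longleftrightarrow> [] \<in> T \<and> (\<forall>v\<in>T. length v \<le> n \<and> v \<noteq> [] \<longrightarrow> butlast v \<in> T) \<and>
     (\<forall>u\<in>T. length u < n \<longrightarrow> (\<forall>i<\<beta>. (u @ [i] \<in> T) = (u @ [0] \<in> T)))"

lemma Vld_take:
  assumes V: "Vld \<beta> T n" and v: "v \<in> T" "length v \<le> n"
  shows "k \<le> length v \<Longrightarrow> take k v \<in> T"
proof (induction "length v - k" arbitrary: k)
  case 0 then show ?case using v by simp
next
  case (Suc m)
  then have k: "k < length v" by simp
  then have "take (Suc k) v \<in> T" using Suc(1)[of "Suc k"] Suc(2) by simp
  moreover have "butlast (take (Suc k) v) = take k v" using k by (simp add: take_Suc_conv_app_nth)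
  moreover have "take (Suc k) v \<noteq> []" "length (take (Suc k) v) \<le> n" using k v by auto
  ultimately show ?case using V unfolding Vld_def by metis
qed



definition out :: "nat \<Rightarrow> (nat list \<Rightarrow> real) \<Rightarrow> real \<Rightarrow> (nat list \<Rightarrow> real) \<Rightarrow> nat list set" where
  "out \<beta> thr \<theta> \<eta> = {v. set v \<subseteq> {..<\<beta>} \<and> (\<forall>k<length v. \<theta> < thr (take k v) + \<eta> (take k v))}"

lemma privtree_output_out:
  "privtree_output \<beta> sdom D \<theta> \<delta> \<eta> = out \<beta> (biased_count sdom D \<theta> \<delta>) \<theta> \<eta>"
  by (simp add: privtree_output_def out_def)

lemma out_snoc:
  assumes "set v \<subseteq> {..<\<beta>}" "i < \<beta>"
  shows "(v @ [i] \<in> out \<beta> thr \<theta> \<eta>) \<longleftrightarrow> (v \<in> out \<beta> thr \<theta> \<eta> \<and> \<theta> < thr v + \<eta> v)"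
proof -
  have "(\<forall>k<length (v @ [i]). \<theta> < thr (take k (v @ [i])) + \<eta> (take k (v @ [i]))) \<longleftrightarrow>
        (\<forall>k<length v. \<theta> < thr (take k v) + \<eta> (take k v)) \<and> \<theta> < thr v + \<eta> v"
    by (auto simp: less_Suc_eq take_append)
  then show ?thesis using assms by (simp add: out_def)
qed

lemma out_Nil: "[] \<in> out \<beta> thr \<theta> \<eta>" by (simp add: out_def)

lemma out_butlast:
  assumes "v \<in> out \<beta> thr \<theta> \<eta>" shows "butlast v \<in> out \<beta> thr \<theta> \<eta>"
proof (cases "v = []")
  case True then show ?thesis using assms by simp
next
  case False
  then have v: "v = butlast v @ [last v]" by simp
  have s: "set v \<subseteq> {..<\<beta>}" using assms by (simp add: out_def)
  then have "set (butlast v) \<subseteq> {..<\<beta>}" "last v < \<beta>" using False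
    by (auto dest: in_set_butlastD) (metis False last_in_set lessThan_iff subsetD)
  then show ?thesis using out_snoc[of "butlast v" \<beta> "last v" thr \<theta> \<eta>] assms v by metis
qed

definition En :: "nat \<Rightarrow> (nat list \<Rightarrow> real) \<Rightarrow> real \<Rightarrow> nat list set \<Rightarrow> nat \<Rightarrow> (nat list \<Rightarrow> real) set" where
  "En \<beta> thr \<theta> T n = {\<eta>. \<forall>v. set v \<subseteq> {..<\<beta>} \<and> length v \<le> n \<longrightarrow> (v \<in> out \<beta> thr \<theta> \<eta> \<longleftrightarrow> v \<in> T)}"

definition Qn :: "nat list set \<Rightarrow> nat \<Rightarrow> nat list set" where
  "Qn T n = {u \<in> T. length u < n}"

lemma En_char:
  assumes T: "T \<subseteq> {v. set v \<subseteq> {..<\<beta>}}" and b: "0 < \<beta>"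
  shows "En \<beta> thr \<theta> T n = (if Vld \<beta> T n then {\<eta>. \<forall>u\<in>Qn T n. (\<theta> < thr u + \<eta> u) = (u @ [0] \<in> T)} else {})"
proof -
  have 1: "Vld \<beta> T n \<and> (\<forall>u\<in>Qn T n. (\<theta> < thr u + \<eta> u) = (u @ [0] \<in> T))" if E: "\<eta> \<in> En \<beta> thr \<theta> T n" for \<eta>
  proof -
    let ?O = "out \<beta> thr \<theta> \<eta>"
    have E': "v \<in> ?O \<longleftrightarrow> v \<in> T" if "set v \<subseteq> {..<\<beta>}" "length v \<le> n" for v
      using E that by (simp add: En_def)
    have TO: "v \<in> ?O" if "v \<in> T" "length v \<le> n" for v
      using E' that T by auto
    have nil: "[] \<in> T" using E'[of "[]"] out_Nil by simp
    have bl: "butlast v \<in> T" if "v \<in> T" "length v \<le> n" "v \<noteq> []" for v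
    proof -
      have "butlast v \<in> ?O" using out_butlast TO that by blast
      moreover have "set (butlast v) \<subseteq> {..<\<beta>}" using that T by (auto dest: in_set_butlastD)
      ultimately show ?thesis using E' that by simp
    qed
    have pass: "(u @ [i] \<in> T) = (u \<in> ?O \<and> \<theta> < thr u + \<eta> u)" if "u \<in> T" "length u < n" "i < \<beta>" for u i
    proof -
      have "set u \<subseteq> {..<\<beta>}" using that T by auto
      then have "set (u @ [i]) \<subseteq> {..<\<beta>}" using that by auto
      then have "(u @ [i] \<in> T) = (u @ [i] \<in> ?O)" using E' that by simp
      also have "\<dots> = (u \<in> ?O \<and> \<theta> < thr u + \<eta> u)" using out_snoc \<open>set u \<subseteq> _\<close> that by blast
      finally show ?thesis .
    qed
    have ch: "\<forall>u\<in>T. length u < n \<longrightarrow> (\<forall>i<\<beta>. (u @ [i] \<in> T) = (u @ [0] \<in> T))"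
      using pass b by auto
    have "Vld \<beta> T n" unfolding Vld_def using nil bl ch by blast
    moreover have "\<forall>u\<in>Qn T n. (\<theta> < thr u + \<eta> u) = (u @ [0] \<in> T)"
      using pass[of _ 0] b TO by (auto simp: Qn_def)
    ultimately show ?thesis by blast
  qed
  have 2: "\<eta> \<in> En \<beta> thr \<theta> T n" if V: "Vld \<beta> T n" and C: "\<forall>u\<in>Qn T n. (\<theta> < thr u + \<eta> u) = (u @ [0] \<in> T)" for \<eta>
  proof -
    let ?O = "out \<beta> thr \<theta> \<eta>"
    have "set v \<subseteq> {..<\<beta>} \<and> length v \<le> n \<longrightarrow> (v \<in> ?O \<longleftrightarrow> v \<in> T)" for v
    proof (induction v rule: rev_induct)
      case Nil then show ?case using V out_Nil by (simp add: Vld_def)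
    next
      case (snoc i v)
      show ?case
      proof
        assume a: "set (v @ [i]) \<subseteq> {..<\<beta>} \<and> length (v @ [i]) \<le> n"
        then have sv: "set v \<subseteq> {..<\<beta>}" "i < \<beta>" "length v < n" by auto
        have "(v @ [i] \<in> ?O) = (v \<in> ?O \<and> \<theta> < thr v + \<eta> v)" using out_snoc sv by blast
        also have "\<dots> = (v \<in> T \<and> \<theta> < thr v + \<eta> v)" using snoc sv by simp
        also have "\<dots> = (v @ [i] \<in> T)"
        proof (cases "v \<in> T")
          case True
          then have "(\<theta> < thr v + \<eta> v) = (v @ [0] \<in> T)" using C sv by (simp add: Qn_def)
          also have "\<dots> = (v @ [i] \<in> T)" using V True sv unfolding Vld_def by blast
          finally show ?thesis using True by simp
        next
          case False
          have "v @ [i] \<notin> T"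
          proof
            assume "v @ [i] \<in> T"
            then have "butlast (v @ [i]) \<in> T" using V a unfolding Vld_def by blast
            then show False using False by simp
          qed
          then show ?thesis using False by simp
        qed
        finally show "(v @ [i] \<in> ?O) = (v @ [i] \<in> T)" .
      qed
    qed
    then show ?thesis by (simp add: En_def)
  qed
  show ?thesis
  proof (cases "Vld \<beta> T n")
    case True then show ?thesis using 1 2 by auto
  next
    case False then show ?thesis using 1 by auto
  qed
qed



lemma prob_space_noise: "0 < l \<Longrightarrow> prob_space (noise_space l)"
  unfolding noise_space_def by (intro prob_space_PiM prob_space_laplace)

lemma space_noise[simp]: "space (noise_space l) = UNIV"
  by (simp add: noise_space_def space_PiM PiE_UNIV_domain)

lemma prod_event_eq:
  "{\<eta>. \<forall>u\<in>Q. \<eta> u \<in> A u} = prod_emb UNIV (\<lambda>_. laplace l) Q (Pi\<^sub>E Q A)"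
  by (auto simp: prod_emb_def PiE_def extensional_def Pi_def)

lemma prod_event:
  assumes l: "0 < l" and Q: "finite Q" and A: "\<And>u. u \<in> Q \<Longrightarrow> A u \<in> sets borel"
  shows "{\<eta>. \<forall>u\<in>Q. \<eta> u \<in> A u} \<in> sets (noise_space l)"
    "measure (noise_space l) {\<eta>. \<forall>u\<in>Q. \<eta> u \<in> A u} = (\<Prod>u\<in>Q. measure (laplace l) (A u))"
proof -
  interpret P: prob_space "laplace l" by (rule prob_space_laplace[OF l])
  show "{\<eta>. \<forall>u\<in>Q. \<eta> u \<in> A u} \<in> sets (noise_space l)"
    unfolding prod_event_eq[of Q A l] noise_space_def
    using Q A by (intro sets_PiM_I) auto
  have "emeasure (noise_space l) {\<eta>. \<forall>u\<in>Q. \<eta> u \<in> A u} = (\<Prod>u\<in>Q. emeasure (laplace l) (A u))"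
    unfolding prod_event_eq[of Q A l] noise_space_def
    using Q A by (intro emeasure_PiM_emb prob_space_laplace l) auto
  also have "\<dots> = (\<Prod>u\<in>Q. ennreal (measure (laplace l) (A u)))"
    using P.emeasure_eq_measure by simp
  also have "\<dots> = ennreal (\<Prod>u\<in>Q. measure (laplace l) (A u))"
    by (rule prod_ennreal) simp
  finally show "measure (noise_space l) {\<eta>. \<forall>u\<in>Q. \<eta> u \<in> A u} = (\<Prod>u\<in>Q. measure (laplace l) (A u))"
    by (simp add: measure_def prod_nonneg)
qed




lemma chain2:
  assumes ss: "splitting_scheme \<Omega> \<beta> sdom" and u: "set u \<subseteq> {..<\<beta>}" and v: "set v \<subseteq> {..<\<beta>}"
    and xu: "x \<in> sdom u" and xv: "x \<in> sdom v" and ne: "u \<noteq> v"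
  shows "(length u < length v \<and> take (length u) v = u) \<or> (length v < length u \<and> take (length v) u = v)"
proof (cases "length u \<le> length v")
  case True
  have t: "take (length u) v = u" by (rule ss_chain[OF ss u v xu xv True])
  then have "length u \<noteq> length v" using ne by auto
  then show ?thesis using True t by simp
next
  case False
  have t: "take (length v) u = v" by (rule ss_chain[OF ss v u xv xu]) (use False in simp)
  then show ?thesis using False by simp
qed

lemma thr_D:
  "\<theta> - biased_count sdom D \<theta> \<delta> u = min \<delta> (\<theta> - real (node_count sdom D u) + real (length u) * \<delta>)"
  by (simp add: biased_count_def)

lemma thr_D':
  "\<theta> - biased_count sdom (D + {#x#}) \<theta> \<delta> u =
     (if x \<in> sdom u then min \<delta> (\<theta> - real (node_count sdom D u) + real (length u) * \<delta> - 1)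
      else \<theta> - biased_count sdom D \<theta> \<delta> u)"
proof -
  have e: "real (node_count sdom (D + {#x#}) u) = real (node_count sdom D u) + (if x \<in> sdom u then 1 else 0)"
    by (simp add: node_count_def)
  show ?thesis unfolding biased_count_def e by (auto simp: min_def max_def)
qed

lemma main_n:
  assumes ss: "splitting_scheme \<Omega> \<beta> sdom" and l: "0 < l" and d: "0 < \<delta>"
    and T: "T \<subseteq> {v. set v \<subseteq> {..<\<beta>}}" and V: "Vld \<beta> T n"
    and Cb: "(2 + 1 / (exp (\<delta> / l) - 1)) / l \<le> \<epsilon>" and Lb: "1 / l \<le> \<epsilon>"
    and F_def: "F = (\<lambda>thr. \<Prod>u\<in>Qn T n. (if u @ [0] \<in> T then lapS l (\<theta> - thr u) else 1 - lapS l (\<theta> - thr u)))"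
  shows "F (biased_count sdom (D + {#x#}) \<theta> \<delta>) \<le> exp \<epsilon> * F (biased_count sdom D \<theta> \<delta>)"
    and "F (biased_count sdom D \<theta> \<delta>) \<le> exp \<epsilon> * F (biased_count sdom (D + {#x#}) \<theta> \<delta>)"
proof -
  define Q where "Q = Qn T n"
  define X where "X = {u\<in>Q. x \<in> sdom u}"
  define c where "c = (\<lambda>u. real (node_count sdom D u))"
  define w where "w = (\<lambda>u. \<theta> - c u + real (length u) * \<delta>)"
  define z where "z = (\<lambda>u. \<theta> - biased_count sdom D \<theta> \<delta> u)"
  define y where "y = (\<lambda>u. \<theta> - biased_count sdom (D + {#x#}) \<theta> \<delta> u)"
  define p where "p = (\<lambda>t u. if u @ [0] \<in> T then lapS l t else 1 - lapS l t)"
  have FD: "F (biased_count sdom D \<theta> \<delta>) = (\<Prod>u\<in>Q. p (z u) u)"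
    by (simp add: F_def Q_def p_def z_def)
  have FD': "F (biased_count sdom (D + {#x#}) \<theta> \<delta>) = (\<Prod>u\<in>Q. p (y u) u)"
    by (simp add: F_def Q_def p_def y_def)
  have Qfin: "finite Q"
  proof (rule finite_subset)
    show "Q \<subseteq> {v. set v \<subseteq> {..<\<beta>} \<and> length v \<le> n}" using T by (auto simp: Q_def Qn_def)
    show "finite {v. set v \<subseteq> {..<\<beta>} \<and> length v \<le> n}" by (rule finite_lists_length_le) simp
  qed
  have XQ: "X \<subseteq> Q" and Xfin: "finite X" using Qfin by (auto simp: X_def)
  have Qs: "set u \<subseteq> {..<\<beta>}" "u \<in> T" "length u < n" if "u \<in> Q" for u
    using that T by (auto simp: Q_def Qn_def)
  have zX: "z u = min \<delta> (w u)" for u by (simp add: z_def w_def c_def thr_D)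
  have yX: "y u = min \<delta> (w u - 1)" if "u \<in> X" for u
    using that unfolding y_def thr_D' by (simp add: w_def c_def X_def)
  have yNX: "y u = z u" if "u \<in> Q" "u \<notin> X" for u
    using that unfolding y_def thr_D' by (simp add: z_def X_def)
  have yz: "y u \<le> z u" "z u - y u \<le> 1" if "u \<in> X" for u
    using that yX zX by auto
  have ppos: "0 < p t u" for t u using lapS_bounds[OF l, of t] by (simp add: p_def)
  have pnn: "0 \<le> p t u" for t u using ppos[of t u] by simp
  have ch: "(length u < length v \<and> take (length u) v = u) \<or> (length v < length u \<and> take (length v) u = v)"
    if "u \<in> X" "v \<in> X" "u \<noteq> v" for u v
    using chain2[OF ss, of u v x] that Qs by (auto simp: X_def)
  have wlt: "\<delta> \<le> w v - w u" if "u \<in> X" "v \<in> X" "length u < length v" "take (length u) v = u" for u v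
  proof -
    have "v = u @ drop (length u) v" using that(4) by (metis append_take_drop_id)
    then have "sdom v \<subseteq> sdom u" using ss_mono[OF ss, of u "drop (length u) v"] Qs that(2) XQ by auto
    then have "c v \<le> c u" unfolding c_def using nc_mono by (simp add: nc_mono)
    moreover have "real (length u) * \<delta> + \<delta> \<le> real (length v) * \<delta>"
    proof -
      have "real (length u) + 1 \<le> real (length v)" using that(3) by simp
      then show ?thesis using d by (metis distrib_right mult_1 mult_right_mono less_imp_le)
    qed
    ultimately show ?thesis unfolding w_def by linarith
  qed
  have sepX: "sep \<delta> X w" unfolding sep_def
  proof (intro ballI impI)
    fix u v assume uv: "u \<in> X" "v \<in> X" "u \<noteq> v"
    from ch[OF uv] show "\<delta> \<le> \<bar>w u - w v\<bar>"
    proof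
      assume "length u < length v \<and> take (length u) v = u"
      then show ?thesis using wlt[OF uv(1,2)] by auto
    next
      assume "length v < length u \<and> take (length v) u = v"
      then show ?thesis using wlt[OF uv(2,1)] by auto
    qed
  qed
  have Ceq: "C = (2 + 1 / (exp (\<delta> / l) - 1)) / l \<Longrightarrow> True" for C by simp
  define r where "r = (\<lambda>u. if u \<in> X then Lam l (min \<delta> (w u)) - Lam l (min \<delta> (w u - 1)) else 0)"
  have g_le: "p (y u) u \<le> exp (r u) * p (z u) u" if "u \<in> Q" for u
  proof (cases "u \<in> X")
    case False then show ?thesis using yNX[OF that False] by (simp add: r_def)
  next
    case True
    have rr: "r u = Lam l (z u) - Lam l (y u)" using True by (simp add: r_def zX yX)
    show ?thesis
    proof (cases "u @ [0] \<in> T")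
      case True
      have "lapS l (y u) / lapS l (z u) \<le> exp (Lam l (z u) - Lam l (y u))"
        by (rule lapS_ratio[OF l yz(1)[OF \<open>u \<in> X\<close>]])
      then show ?thesis using True lapS_bounds[OF l, of "z u"] rr by (simp add: p_def divide_le_eq)
    next
      case False
      have "1 - lapS l (y u) \<le> 1 - lapS l (z u)" using lapS_mono[OF l yz(1)[OF \<open>u \<in> X\<close>]] by simp
      moreover have "1 \<le> exp (r u)" using Lam_mono_lip(1)[OF l yz(1)[OF \<open>u \<in> X\<close>]] rr by simp
      moreover have "0 \<le> 1 - lapS l (z u)" using lapS_bounds[OF l, of "z u"] by simp
      ultimately have "1 - lapS l (y u) \<le> exp (r u) * (1 - lapS l (z u))"
        by (metis mult_right_mono mult_1 order_trans)
      then show ?thesis using False by (simp add: p_def)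
    qed
  qed
  have sr: "(\<Sum>u\<in>Q. r u) \<le> \<epsilon>"
  proof -
    have "(\<Sum>u\<in>Q. r u) = (\<Sum>u\<in>X. Lam l (min \<delta> (w u)) - Lam l (min \<delta> (w u - 1)))"
      unfolding r_def using sum.inter_restrict[OF Qfin, of "\<lambda>u. Lam l (min \<delta> (w u)) - Lam l (min \<delta> (w u - 1))" X] XQ
      by (simp add: Int_absorb1)
    also have "\<dots> \<le> (2 + 1 / (exp (\<delta> / l) - 1)) / l" by (rule sum_K[OF l d Xfin sepX])
    finally show ?thesis using Cb by simp
  qed
  have "(\<Prod>u\<in>Q. p (y u) u) \<le> (\<Prod>u\<in>Q. exp (r u) * p (z u) u)"
    by (rule prod_mono) (use g_le pnn in auto)
  also have "\<dots> = exp (\<Sum>u\<in>Q. r u) * (\<Prod>u\<in>Q. p (z u) u)"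
    using Qfin by (simp add: prod.distrib exp_sum)
  also have "\<dots> \<le> exp \<epsilon> * (\<Prod>u\<in>Q. p (z u) u)"
    using sr ppos by (intro mult_right_mono prod_nonneg) (auto intro: less_imp_le)
  finally show "F (biased_count sdom (D + {#x#}) \<theta> \<delta>) \<le> exp \<epsilon> * F (biased_count sdom D \<theta> \<delta>)"
    using FD FD' by simp
  define L where "L = {u\<in>X. u @ [0] \<notin> T}"
  have LX: "L \<subseteq> X" and Lfin: "finite L" using Xfin by (auto simp: L_def)
  have Lcard: "card L \<le> Suc 0"
  proof (subst card_le_Suc0_iff_eq[OF Lfin], intro ballI, rule ccontr)
    fix u v assume uv: "u \<in> L" "v \<in> L" "u \<noteq> v"
    have key: False if a: "u \<in> L" "v \<in> L" "length u < length v" "take (length u) v = u" for u v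
    proof -
      have vQ: "v \<in> Q" "u \<in> Q" using a LX XQ by auto
      have "take (Suc (length u)) v \<in> T"
        using Vld_take[OF V Qs(2)[OF vQ(1)]] Qs(3)[OF vQ(1)] a(3) by simp
      moreover have "take (Suc (length u)) v = u @ [v ! length u]"
        using a(3,4) by (simp add: take_Suc_conv_app_nth)
      moreover have "v ! length u < \<beta>"
      proof -
        have "v ! length u \<in> set v" using a(3) by simp
        then show ?thesis using Qs(1)[OF vQ(1)] by auto
      qed
      ultimately have "u @ [0] \<in> T"
        using V Qs(2,3)[OF vQ(2)] unfolding Vld_def by metis
      then show False using a(1) by (simp add: L_def)
    qed
    have "u \<in> X" "v \<in> X" using uv LX by auto
    from ch[OF this uv(3)] show False
    proof
      assume "length u < length v \<and> take (length u) v = u"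
      then show False using key[OF uv(1,2)] by blast
    next
      assume "length v < length u \<and> take (length v) u = v"
      then show False using key[OF uv(2,1)] by blast
    qed
  qed
  define s where "s = (\<lambda>u. if u \<in> L then 1 / l else 0)"
  have f_le: "p (z u) u \<le> exp (s u) * p (y u) u" if "u \<in> Q" for u
  proof (cases "u \<in> X")
    case False then show ?thesis using yNX[OF that False] by (simp add: s_def L_def)
  next
    case True
    note uX = True
    show ?thesis
    proof (cases "u @ [0] \<in> T")
      case True
      have "lapS l (z u) \<le> lapS l (y u)" by (rule lapS_mono[OF l yz(1)[OF uX]])
      then show ?thesis using True by (simp add: p_def s_def L_def)
    next
      case False
      have uL: "u \<in> L" using uX False by (simp add: L_def)
      have "lapS l (- z u) / lapS l (- y u) \<le> exp (Lam l (- y u) - Lam l (- z u))"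
        by (rule lapS_ratio[OF l]) (use yz(1)[OF uX] in simp)
      also have "\<dots> \<le> exp ((- y u - - z u) / l)"
        using Lam_mono_lip(2)[OF l, of "- z u" "- y u"] yz(1)[OF uX] by simp
      also have "\<dots> \<le> exp (1 / l)"
        using yz(2)[OF uX] l by (simp add: divide_right_mono)
      finally have "lapS l (- z u) \<le> exp (1 / l) * lapS l (- y u)"
        using lapS_bounds[OF l, of "- y u"] by (simp add: divide_le_eq mult.commute)
      then show ?thesis using False uL by (simp add: p_def s_def lapS_sym)
    qed
  qed
  have ss1: "(\<Sum>u\<in>Q. s u) \<le> \<epsilon>"
  proof -
    have "(\<Sum>u\<in>Q. s u) = real (card L) / l"
      unfolding s_def using sum.inter_restrict[OF Qfin, of "\<lambda>u. 1 / l" L] LX XQ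
      by (simp add: Int_absorb1)
    also have "\<dots> \<le> 1 / l" using Lcard l by (simp add: divide_right_mono)
    finally show ?thesis using Lb by simp
  qed
  have "(\<Prod>u\<in>Q. p (z u) u) \<le> (\<Prod>u\<in>Q. exp (s u) * p (y u) u)"
    by (rule prod_mono) (use f_le pnn in auto)
  also have "\<dots> = exp (\<Sum>u\<in>Q. s u) * (\<Prod>u\<in>Q. p (y u) u)"
    using Qfin by (simp add: prod.distrib exp_sum)
  also have "\<dots> \<le> exp \<epsilon> * (\<Prod>u\<in>Q. p (y u) u)"
    using ss1 ppos by (intro mult_right_mono prod_nonneg) (auto intro: less_imp_le)
  finally show "F (biased_count sdom D \<theta> \<delta>) \<le> exp \<epsilon> * F (biased_count sdom (D + {#x#}) \<theta> \<delta>)"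
    using FD FD' by simp
qed



lemma En_sets_measure:
  assumes l: "0 < l" and b: "0 < \<beta>" and T: "T \<subseteq> {v. set v \<subseteq> {..<\<beta>}}"
  shows "En \<beta> thr \<theta> T n \<in> sets (noise_space l)"
    "measure (noise_space l) (En \<beta> thr \<theta> T n) = (if Vld \<beta> T n then
        (\<Prod>u\<in>Qn T n. (if u @ [0] \<in> T then lapS l (\<theta> - thr u) else 1 - lapS l (\<theta> - thr u))) else 0)"
proof -
  define A where "A = (\<lambda>u. if u @ [0] \<in> T then {\<theta> - thr u<..} else {..\<theta> - thr u})"
  have Qfin: "finite (Qn T n)"
  proof (rule finite_subset)
    show "Qn T n \<subseteq> {v. set v \<subseteq> {..<\<beta>} \<and> length v \<le> n}" using T by (auto simp: Qn_def)
    show "finite {v. set v \<subseteq> {..<\<beta>} \<and> length v \<le> n}" by (rule finite_lists_length_le) simp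
  qed
  have Aset: "A u \<in> sets borel" for u by (simp add: A_def)
  have eq: "{\<eta>. \<forall>u\<in>Qn T n. (\<theta> < thr u + \<eta> u) = (u @ [0] \<in> T)} = {\<eta>. \<forall>u\<in>Qn T n. \<eta> u \<in> A u}"
    by (auto simp: A_def)
  have mA: "measure (laplace l) (A u) = (if u @ [0] \<in> T then lapS l (\<theta> - thr u) else 1 - lapS l (\<theta> - thr u))" for u
    by (simp add: A_def lap_Ioi[OF l] lap_Iic[OF l])
  show "En \<beta> thr \<theta> T n \<in> sets (noise_space l)"
    unfolding En_char[OF T b] eq using prod_event(1)[OF l Qfin Aset] by simp
  show "measure (noise_space l) (En \<beta> thr \<theta> T n) = (if Vld \<beta> T n then
        (\<Prod>u\<in>Qn T n. (if u @ [0] \<in> T then lapS l (\<theta> - thr u) else 1 - lapS l (\<theta> - thr u))) else 0)"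
    unfolding En_char[OF T b] eq using prod_event(2)[OF l Qfin Aset] mA by simp
qed

lemma event_lim:
  assumes l: "0 < l" and b: "0 < \<beta>" and T: "T \<subseteq> {v. set v \<subseteq> {..<\<beta>}}"
  shows "(\<lambda>n. measure (noise_space l) (En \<beta> thr \<theta> T n)) \<longlonglongrightarrow>
           measure (noise_space l) {\<eta> \<in> space (noise_space l). out \<beta> thr \<theta> \<eta> = T}"
proof -
  interpret P: prob_space "noise_space l" by (rule prob_space_noise[OF l])
  have eq: "{\<eta> \<in> space (noise_space l). out \<beta> thr \<theta> \<eta> = T} = (\<Inter>n. En \<beta> thr \<theta> T n)"
  proof (intro set_eqI iffI)
    fix \<eta> assume "\<eta> \<in> {\<eta> \<in> space (noise_space l). out \<beta> thr \<theta> \<eta> = T}"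
    then show "\<eta> \<in> (\<Inter>n. En \<beta> thr \<theta> T n)" by (auto simp: En_def)
  next
    fix \<eta> assume a: "\<eta> \<in> (\<Inter>n. En \<beta> thr \<theta> T n)"
    have "v \<in> out \<beta> thr \<theta> \<eta> \<longleftrightarrow> v \<in> T" for v
    proof (cases "set v \<subseteq> {..<\<beta>}")
      case True
      then show ?thesis using a by (auto simp: En_def)
    next
      case False
      then show ?thesis using T by (auto simp: out_def)
    qed
    then show "\<eta> \<in> {\<eta> \<in> space (noise_space l). out \<beta> thr \<theta> \<eta> = T}" by auto
  qed
  have "range (En \<beta> thr \<theta> T) \<subseteq> sets (noise_space l)"
    using En_sets_measure(1)[OF l b T] by auto
  moreover have "decseq (En \<beta> thr \<theta> T)"
    by (auto simp: decseq_def En_def)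
  ultimately show ?thesis unfolding eq by (rule P.finite_Lim_measure_decseq)
qed

theorem theorem1:
  fixes \<Omega> :: "'a set" and \<beta> :: nat and sdom :: "nat list \<Rightarrow> 'a set"
    and \<gamma> \<epsilon> l \<theta> :: real
  assumes "splitting_scheme \<Omega> \<beta> sdom"
    and "\<gamma> > 0" and "\<epsilon> > 0"
    and "l \<ge> (2 * exp \<gamma> - 1) / (exp \<gamma> - 1) * (1 / \<epsilon>)"
  shows "\<forall>D x T. set_mset D \<subseteq> \<Omega> \<and> x \<in> \<Omega> \<longrightarrow>
      privtree_prob \<beta> sdom D l \<theta> (\<gamma> * l) T
        \<le> exp \<epsilon> * privtree_prob \<beta> sdom (D + {#x#}) l \<theta> (\<gamma> * l) T \<and>
      privtree_prob \<beta> sdom (D + {#x#}) l \<theta> (\<gamma> * l) T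
        \<le> exp \<epsilon> * privtree_prob \<beta> sdom D l \<theta> (\<gamma> * l) T"
proof (intro allI impI)
  fix D :: "'a multiset" and x :: 'a and T :: "nat list set"
  note ss = assms(1)
  have b: "0 < \<beta>" using ss by (simp add: splitting_scheme_def)
  define C where "C = (2 * exp \<gamma> - 1) / (exp \<gamma> - 1)"
  have eg: "1 < exp \<gamma>" using assms(2) by simp
  have C1: "1 \<le> C" using eg by (simp add: C_def field_simps)
  have lC: "C / \<epsilon> \<le> l" using assms(4) by (simp add: C_def)
  have l: "0 < l" using lC C1 assms(3) by (smt (verit) divide_pos_pos)
  have CL: "C / l \<le> \<epsilon>" using lC l assms(3) C1 by (simp add: divide_le_eq field_simps)
  have LL: "1 / l \<le> \<epsilon>"
  proof -
    have "1 / l \<le> C / l" using C1 l by (simp add: divide_right_mono)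
    then show ?thesis using CL by simp
  qed
  define \<delta> where "\<delta> = \<gamma> * l"
  have d: "0 < \<delta>" using assms(2) l by (simp add: \<delta>_def)
  have Cb: "(2 + 1 / (exp (\<delta> / l) - 1)) / l \<le> \<epsilon>"
  proof -
    have "\<delta> / l = \<gamma>" using l by (simp add: \<delta>_def)
    moreover have "2 + 1 / (exp \<gamma> - 1) = C" using eg by (simp add: C_def field_simps)
    ultimately show ?thesis using CL by simp
  qed
  define thr where "thr = biased_count sdom D \<theta> \<delta>"
  define thr' where "thr' = biased_count sdom (D + {#x#}) \<theta> \<delta>"
  have PD: "privtree_prob \<beta> sdom D l \<theta> \<delta> T = measure (noise_space l) {\<eta> \<in> space (noise_space l). out \<beta> thr \<theta> \<eta> = T}"
    by (simp add: privtree_prob_def privtree_output_out thr_def)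
  have PD': "privtree_prob \<beta> sdom (D + {#x#}) l \<theta> \<delta> T = measure (noise_space l) {\<eta> \<in> space (noise_space l). out \<beta> thr' \<theta> \<eta> = T}"
    by (simp add: privtree_prob_def privtree_output_out thr'_def)
  have "privtree_prob \<beta> sdom D l \<theta> \<delta> T \<le> exp \<epsilon> * privtree_prob \<beta> sdom (D + {#x#}) l \<theta> \<delta> T \<and>
        privtree_prob \<beta> sdom (D + {#x#}) l \<theta> \<delta> T \<le> exp \<epsilon> * privtree_prob \<beta> sdom D l \<theta> \<delta> T"
  proof (cases "T \<subseteq> {v. set v \<subseteq> {..<\<beta>}}")
    case False
    have "{\<eta> \<in> space (noise_space l). out \<beta> t \<theta> \<eta> = T} = {}" for t
      using False by (auto simp: out_def)
    then show ?thesis unfolding PD PD' by simp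
  next
    case True
    define F where "F n = (\<lambda>thr. \<Prod>u\<in>Qn T n. (if u @ [0] \<in> T then lapS l (\<theta> - thr u) else 1 - lapS l (\<theta> - thr u)))" for n
    have M: "measure (noise_space l) (En \<beta> t \<theta> T n) = (if Vld \<beta> T n then F n t else 0)" for t n
      using En_sets_measure(2)[OF l b True] by (simp add: F_def)
    have ineq: "measure (noise_space l) (En \<beta> thr' \<theta> T n) \<le> exp \<epsilon> * measure (noise_space l) (En \<beta> thr \<theta> T n)
        \<and> measure (noise_space l) (En \<beta> thr \<theta> T n) \<le> exp \<epsilon> * measure (noise_space l) (En \<beta> thr' \<theta> T n)" for n
    proof (cases "Vld \<beta> T n")
      case False then show ?thesis unfolding M by simp
    next
      case V: True
      have "F n thr' \<le> exp \<epsilon> * F n thr" "F n thr \<le> exp \<epsilon> * F n thr'"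
        using main_n[OF ss l d True V Cb LL, of "F n" \<theta> D x] by (simp_all add: F_def thr_def thr'_def)
      then show ?thesis unfolding M using V by simp
    qed
    have L: "(\<lambda>n. measure (noise_space l) (En \<beta> thr \<theta> T n)) \<longlonglongrightarrow> privtree_prob \<beta> sdom D l \<theta> \<delta> T"
      unfolding PD by (rule event_lim[OF l b True])
    have L': "(\<lambda>n. measure (noise_space l) (En \<beta> thr' \<theta> T n)) \<longlonglongrightarrow> privtree_prob \<beta> sdom (D + {#x#}) l \<theta> \<delta> T"
      unfolding PD' by (rule event_lim[OF l b True])
    have 1: "privtree_prob \<beta> sdom D l \<theta> \<delta> T \<le> exp \<epsilon> * privtree_prob \<beta> sdom (D + {#x#}) l \<theta> \<delta> T"
      by (rule LIMSEQ_le[OF L tendsto_mult_left[OF L']]) (use ineq in auto)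
    have 2: "privtree_prob \<beta> sdom (D + {#x#}) l \<theta> \<delta> T \<le> exp \<epsilon> * privtree_prob \<beta> sdom D l \<theta> \<delta> T"
      by (rule LIMSEQ_le[OF L' tendsto_mult_left[OF L]]) (use ineq in auto)
    show ?thesis using 1 2 by simp
  qed
  then show "privtree_prob \<beta> sdom D l \<theta> (\<gamma> * l) T \<le> exp \<epsilon> * privtree_prob \<beta> sdom (D + {#x#}) l \<theta> (\<gamma> * l) T \<and>
      privtree_prob \<beta> sdom (D + {#x#}) l \<theta> (\<gamma> * l) T \<le> exp \<epsilon> * privtree_prob \<beta> sdom D l \<theta> (\<gamma> * l) T"
    by (simp add: \<delta>_def)
qed


end
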